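(* Let $G$ be a connected, locally finite Cayley graph of a group $\Gamma$, and let $r\in\mathbb{N}$. Then the $r$-local cover $G_r$ of $G$ is (isomorphic to) a connected, locally finite Cayley graph of a finitely presented group $\Gamma_r$ of which $\Gamma$ is a quotient.
   Context: $\mathrm{Cay}(\Gamma,S)$ (for $S\subseteq\Gamma$) has vertex set $\Gamma$, edge set $\{(g,s):g\in\Gamma,s\in S\}$, edge $(g,s)$ joining $g$ and $gs$; graphs may have loops and parallel edges and are viewed as 1-complexes. A cycle may be a loop or a pair of parallel edges; a closed walk once around a cycle $O$ traverses every edge of $O$ exactly once. For a connected graph $G$ and vertex $x_0$, $\pi_1^r(G,x_0)$ is the subgroup of $\pi_1(G,x_0)$ generated by the classes of closed walks $W_0QW_0^-$ with $W_0$ a walk from $x_0$ to a vertex $y$, $Q$ a closed walk at $y$ once around a cycle of length at most $r$, $W_0^-$ the reverse of $W_0$. The $r$-local covering $p_r:G_r\to G$ is the connected normal covering with characteristic subgroup $\pi_1^r(G,x_0)$, and $G_r$ is the $r$-local cover. *)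

theory Defs
  imports "HOL-Algebra.Algebra"
begin

text \<open>A graph is given by a vertex set, an edge set and, for each edge, its pair of
  end vertices (an orientation used only for bookkeeping; the graph is undirected,
  viewed as a 1-complex).\<close>

record ('v,'e) mgraph =
  verts :: "'v set"
  edges :: "'e set"
  ends  :: "'e \<Rightarrow> 'v \<times> 'v"

definition Cay :: "('a,'b) monoid_scheme \<Rightarrow> 'a set \<Rightarrow> ('a, 'a \<times> 'a) mgraph" where
  "Cay \<Gamma> S = \<lparr> verts = carrier \<Gamma>, edges = carrier \<Gamma> \<times> S,
                   ends = (\<lambda>(g,s). (g, g \<otimes>\<^bsub>\<Gamma>\<^esub> s)) \<rparr>"

text \<open>Darts: an edge together with a direction of traversal.\<close>

definition dtail :: "('v,'e,'z) mgraph_scheme \<Rightarrow> 'e \<times> bool \<Rightarrow> 'v" where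
  "dtail G d = (if snd d then fst (ends G (fst d)) else snd (ends G (fst d)))"

definition dhead :: "('v,'e,'z) mgraph_scheme \<Rightarrow> 'e \<times> bool \<Rightarrow> 'v" where
  "dhead G d = (if snd d then snd (ends G (fst d)) else fst (ends G (fst d)))"

definition flip :: "'e \<times> bool \<Rightarrow> 'e \<times> bool" where
  "flip d = (fst d, \<not> snd d)"

fun walk :: "('v,'e,'z) mgraph_scheme \<Rightarrow> 'v \<Rightarrow> ('e \<times> bool) list \<Rightarrow> 'v \<Rightarrow> bool" where
  "walk G x [] y \<longleftrightarrow> x \<in> verts G \<and> x = y"
| "walk G x (d # W) y \<longleftrightarrow> x \<in> verts G \<and> fst d \<in> edges G \<and> dtail G d = x
      \<and> walk G (dhead G d) W y"

definition rev_walk :: "('e \<times> bool) list \<Rightarrow> ('e \<times> bool) list" where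
  "rev_walk W = rev (map flip W)"

definition connected_graph :: "('v,'e,'z) mgraph_scheme \<Rightarrow> bool" where
  "connected_graph G \<longleftrightarrow> verts G \<noteq> {} \<and> (\<forall>x\<in>verts G. \<forall>y\<in>verts G. \<exists>W. walk G x W y)"

definition locally_finite :: "('v,'e,'z) mgraph_scheme \<Rightarrow> bool" where
  "locally_finite G \<longleftrightarrow> (\<forall>v\<in>verts G. finite {e\<in>edges G. fst (ends G e) = v \<or> snd (ends G e) = v})"

definition mg_iso :: "('v,'e,'z) mgraph_scheme \<Rightarrow> ('w,'f,'y) mgraph_scheme \<Rightarrow> bool" where
  "mg_iso G H \<longleftrightarrow> (\<exists>f g. bij_betw f (verts G) (verts H) \<and> bij_betw g (edges G) (edges H) \<and>
     (\<forall>e\<in>edges G. ends H (g e) = (f (fst (ends G e)), f (snd (ends G e)))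
                 \<or> ends H (g e) = (f (snd (ends G e)), f (fst (ends G e)))))"

text \<open>Homotopy of walks: equivalence generated by inserting/deleting backtracks.
  Homotopy classes of closed walks at x0 form pi_1(G,x0).\<close>

definition backtrack_step :: "('e \<times> bool) list \<Rightarrow> ('e \<times> bool) list \<Rightarrow> bool" where
  "backtrack_step A B \<longleftrightarrow> (\<exists>u v d. A = u @ [d, flip d] @ v \<and> B = u @ v)"

definition homotopic :: "('e \<times> bool) list \<Rightarrow> ('e \<times> bool) list \<Rightarrow> bool" where
  "homotopic = (\<lambda>A B. backtrack_step A B \<or> backtrack_step B A)\<^sup>*\<^sup>*"

text \<open>Q is a closed walk at y once around a cycle: a nonempty closed walk using distinct
  edges and visiting distinct vertices (covers loops, pairs of parallel edges, longer cycles).\<close>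

definition once_around :: "('v,'e,'z) mgraph_scheme \<Rightarrow> 'v \<Rightarrow> ('e \<times> bool) list \<Rightarrow> bool" where
  "once_around G y Q \<longleftrightarrow> walk G y Q y \<and> Q \<noteq> [] \<and> distinct (map fst Q) \<and> distinct (map (dhead G) Q)"

definition pi1r_gen :: "('v,'e,'z) mgraph_scheme \<Rightarrow> nat \<Rightarrow> 'v \<Rightarrow> ('e \<times> bool) list \<Rightarrow> bool" where
  "pi1r_gen G r x0 C \<longleftrightarrow> (\<exists>W0 y Q. walk G x0 W0 y \<and> once_around G y Q \<and> length Q \<le> r
       \<and> C = W0 @ Q @ rev_walk W0)"

text \<open>A closed walk at x0 represents an element of pi_1^r(G,x0), the subgroup generated by
  the classes of the generators: it is homotopic to a finite product of generators and their
  inverses (the empty product being the identity).\<close>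

definition in_pi1r :: "('v,'e,'z) mgraph_scheme \<Rightarrow> nat \<Rightarrow> 'v \<Rightarrow> ('e \<times> bool) list \<Rightarrow> bool" where
  "in_pi1r G r x0 W \<longleftrightarrow> walk G x0 W x0 \<and>
     (\<exists>cs. (\<forall>c\<in>set cs. pi1r_gen G r x0 c \<or> pi1r_gen G r x0 (rev_walk c)) \<and> homotopic W (concat cs))"

text \<open>The covering corresponding to the subgroup H = pi_1^r(G,x0) (standard construction):
  vertices are classes of walks from x0, two walks W, W' being identified iff they end at
  the same vertex and [W W'^-] lies in H; the lifts of an edge e at a class [W] (with W
  ending at the first end of e) join [W] and [W e].\<close>

definition cover_rel :: "('v,'e,'z) mgraph_scheme \<Rightarrow> nat \<Rightarrow> 'v \<Rightarrow> ('e \<times> bool) list \<Rightarrow> ('e \<times> bool) list \<Rightarrow> bool" where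
  "cover_rel G r x0 W W' \<longleftrightarrow> (\<exists>y. walk G x0 W y \<and> walk G x0 W' y \<and> in_pi1r G r x0 (W @ rev_walk W'))"

definition cover_class :: "('v,'e,'z) mgraph_scheme \<Rightarrow> nat \<Rightarrow> 'v \<Rightarrow> ('e \<times> bool) list \<Rightarrow> ('e \<times> bool) list set" where
  "cover_class G r x0 W = {W'. cover_rel G r x0 W W'}"

definition local_cover :: "('v,'e,'z) mgraph_scheme \<Rightarrow> nat \<Rightarrow> 'v
     \<Rightarrow> (('e \<times> bool) list set, ('e \<times> bool) list set \<times> 'e) mgraph" where
  "local_cover G r x0 = \<lparr>
     verts = {cover_class G r x0 W | W. \<exists>y. walk G x0 W y},
     edges = {(C, e). (\<exists>W\<in>C. \<exists>y. walk G x0 W y \<and> C = cover_class G r x0 W)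
                      \<and> e \<in> edges G \<and> (\<exists>W\<in>C. walk G x0 W (fst (ends G e)))},
     ends = (\<lambda>(C, e). (C, {W'. \<exists>W\<in>C. walk G x0 W (fst (ends G e))
                                 \<and> cover_rel G r x0 (W @ [(e, True)]) W'})) \<rparr>"

definition word_eval :: "('a,'b) monoid_scheme \<Rightarrow> ('a \<times> bool) list \<Rightarrow> 'a" where
  "word_eval \<Gamma> w = foldr (\<lambda>(a,b) acc. (if b then a else inv\<^bsub>\<Gamma>\<^esub> a) \<otimes>\<^bsub>\<Gamma>\<^esub> acc) w \<one>\<^bsub>\<Gamma>\<^esub>"

definition pres_step :: "('a \<times> bool) list set \<Rightarrow> ('a \<times> bool) list \<Rightarrow> ('a \<times> bool) list \<Rightarrow> bool" where
  "pres_step R A B \<longleftrightarrow> (\<exists>u v. B = u @ v \<and> ((\<exists>d. A = u @ [d, flip d] @ v) \<or> (\<exists>\<rho>\<in>R. A = u @ \<rho> @ v)))"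

definition pres_equiv :: "('a \<times> bool) list set \<Rightarrow> ('a \<times> bool) list \<Rightarrow> ('a \<times> bool) list \<Rightarrow> bool" where
  "pres_equiv R = (\<lambda>A B. pres_step R A B \<or> pres_step R B A)\<^sup>*\<^sup>*"

definition finitely_presented :: "('a,'b) monoid_scheme \<Rightarrow> bool" where
  "finitely_presented \<Gamma> \<longleftrightarrow> (\<exists>A R. finite A \<and> A \<subseteq> carrier \<Gamma> \<and> finite R \<and>
     (\<forall>\<rho>\<in>R. set \<rho> \<subseteq> A \<times> UNIV) \<and>
     (\<forall>g\<in>carrier \<Gamma>. \<exists>w. set w \<subseteq> A \<times> UNIV \<and> word_eval \<Gamma> w = g) \<and>
     (\<forall>w w'. set w \<subseteq> A \<times> UNIV \<longrightarrow> set w' \<subseteq> A \<times> UNIV \<longrightarrow>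
        (word_eval \<Gamma> w = word_eval \<Gamma> w' \<longleftrightarrow> pres_equiv R w w')))"

end

theory Submission
  imports Defs
begin



fun walk_of :: "('a,'b) monoid_scheme \<Rightarrow> 'a \<Rightarrow> ('a \<times> bool) list \<Rightarrow> (('a \<times> 'a) \<times> bool) list" where
  "walk_of G g [] = []"
| "walk_of G g (x # w) = (if snd x then ((g, fst x), True) # walk_of G (g \<otimes>\<^bsub>G\<^esub> fst x) w
      else ((g \<otimes>\<^bsub>G\<^esub> inv\<^bsub>G\<^esub> fst x, fst x), False) # walk_of G (g \<otimes>\<^bsub>G\<^esub> inv\<^bsub>G\<^esub> fst x) w)"

fun wend :: "('a,'b) monoid_scheme \<Rightarrow> 'a \<Rightarrow> ('a \<times> bool) list \<Rightarrow> 'a" where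
  "wend G g [] = g"
| "wend G g (x # w) = wend G (if snd x then g \<otimes>\<^bsub>G\<^esub> fst x else g \<otimes>\<^bsub>G\<^esub> inv\<^bsub>G\<^esub> fst x) w"

definition word_of :: "(('a \<times> 'a) \<times> bool) list \<Rightarrow> ('a \<times> bool) list" where
  "word_of W = map (\<lambda>d. (snd (fst d), snd d)) W"

definition filt :: "'a set \<Rightarrow> ('a \<times> bool) list \<Rightarrow> ('a \<times> bool) list" where
  "filt S w = filter (\<lambda>x. fst x \<in> S) w"

lemma walk_of_append: "walk_of G g (a @ b) = walk_of G g a @ walk_of G (wend G g a) b"
  by (induction a arbitrary: g) auto

lemma wend_append: "wend G g (a @ b) = wend G (wend G g a) b"
  by (induction a arbitrary: g) auto

lemma word_of_walk_of: "word_of (walk_of G g w) = w"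
  by (induction w arbitrary: g) (auto simp: word_of_def)

lemma length_walk_of[simp]: "length (walk_of G g w) = length w"
  by (induction w arbitrary: g) auto

lemma word_of_append[simp]: "word_of (a @ b) = word_of a @ word_of b"
  by (simp add: word_of_def)

lemma word_of_Nil[simp]: "word_of [] = []"
  by (simp add: word_of_def)

lemma flip_flip[simp]: "flip (flip d) = d"
  by (simp add: flip_def)

lemma rev_walk_append[simp]: "rev_walk (a @ b) = rev_walk b @ rev_walk a"
  by (simp add: rev_walk_def)

lemma rev_walk_rev_walk[simp]: "rev_walk (rev_walk a) = a"
  by (simp add: rev_walk_def rev_map comp_def)

lemma rev_walk_Nil[simp]: "rev_walk [] = []"
  by (simp add: rev_walk_def)

lemma rev_walk_Cons: "rev_walk (d # a) = rev_walk a @ [flip d]"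
  by (simp add: rev_walk_def)

lemma word_of_rev_walk: "word_of (rev_walk W) = rev_walk (word_of W)"
  by (simp add: word_of_def rev_walk_def flip_def rev_map)

lemma word_of_concat: "word_of (concat cs) = concat (map word_of cs)"
  by (induction cs) auto

lemma rev_walk_concat: "rev_walk (concat cs) = concat (rev (map rev_walk cs))"
  by (induction cs) auto

lemma filt_append[simp]: "filt S (a @ b) = filt S a @ filt S b"
  by (simp add: filt_def)

lemma filt_rev_walk: "filt S (rev_walk a) = rev_walk (filt S a)"
  by (induction a) (auto simp: filt_def rev_walk_def flip_def)

lemma filt_id: "set w \<subseteq> S \<times> UNIV \<Longrightarrow> filt S w = w"
  by (auto simp: filt_def intro!: filter_True)

lemma filt_set: "set (filt S w) \<subseteq> S \<times> UNIV"
  by (auto simp: filt_def)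

lemma rev_walk_set: "set w \<subseteq> S \<times> UNIV \<Longrightarrow> set (rev_walk w) \<subseteq> S \<times> UNIV"
  by (auto simp: rev_walk_def flip_def)

lemma dtail_Cay: "dtail (Cay G S) ((a,s),b) = (if b then a else a \<otimes>\<^bsub>G\<^esub> s)"
  by (simp add: dtail_def Cay_def)

lemma dhead_Cay: "dhead (Cay G S) ((a,s),b) = (if b then a \<otimes>\<^bsub>G\<^esub> s else a)"
  by (simp add: dhead_def Cay_def)

lemma Cay_simps[simp]: "verts (Cay G S) = carrier G" "edges (Cay G S) = carrier G \<times> S"
  "ends (Cay G S) (a,s) = (a, a \<otimes>\<^bsub>G\<^esub> s)"
  by (simp_all add: Cay_def)

lemma walk_append: "walk G x (A @ B) z \<longleftrightarrow> (\<exists>y. walk G x A y \<and> walk G y B z)"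
proof (induction A arbitrary: x)
  case Nil
  then show ?case by (cases B) auto
qed auto

lemma walk_start: "walk G x W y \<Longrightarrow> x \<in> verts G"
  by (cases W) auto

lemma walk_end: "walk G x W y \<Longrightarrow> y \<in> verts G"
  by (induction W arbitrary: x) auto

lemma walk_edges: "walk G x W y \<Longrightarrow> d \<in> set W \<Longrightarrow> fst d \<in> edges G"
  by (induction W arbitrary: x) auto

context group
begin

lemma word_eval_Nil[simp]: "word_eval G [] = \<one>"
  by (simp add: word_eval_def)

lemma word_eval_Cons[simp]: "word_eval G ((a,b) # w) = (if b then a else inv a) \<otimes> word_eval G w"
  by (simp add: word_eval_def)

lemma word_eval_carrier: "set w \<subseteq> carrier G \<times> UNIV \<Longrightarrow> word_eval G w \<in> carrier G"
  by (induction w) auto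

lemma word_eval_append: "set a \<subseteq> carrier G \<times> UNIV \<Longrightarrow> set b \<subseteq> carrier G \<times> UNIV \<Longrightarrow>
   word_eval G (a @ b) = word_eval G a \<otimes> word_eval G b"
  by (induction a) (auto simp: m_assoc word_eval_carrier)

lemma wend_eq: "g \<in> carrier G \<Longrightarrow> set w \<subseteq> carrier G \<times> UNIV \<Longrightarrow> wend G g w = g \<otimes> word_eval G w"
  by (induction w arbitrary: g) (auto simp: m_assoc word_eval_carrier)

lemma wend_carrier: "g \<in> carrier G \<Longrightarrow> set w \<subseteq> carrier G \<times> UNIV \<Longrightarrow> wend G g w \<in> carrier G"
  by (simp add: wend_eq word_eval_carrier)

lemma walk_walk_of: "S \<subseteq> carrier G \<Longrightarrow> g \<in> carrier G \<Longrightarrow> set w \<subseteq> S \<times> UNIV \<Longrightarrow>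
   walk (Cay G S) g (walk_of G g w) (wend G g w)"
proof (induction w arbitrary: g)
  case (Cons x w)
  obtain s b where x: "x = (s,b)" by force
  have s: "s \<in> S" "s \<in> carrier G" using Cons.prems x by auto
  show ?case using Cons s x by (auto simp: dtail_Cay dhead_Cay m_assoc)
qed auto

lemma walk_imp: "S \<subseteq> carrier G \<Longrightarrow> walk (Cay G S) g W y \<Longrightarrow>
   W = walk_of G g (word_of W) \<and> y = wend G g (word_of W) \<and> set (word_of W) \<subseteq> S \<times> UNIV"
proof (induction W arbitrary: g)
  case (Cons d W)
  obtain a s b where d: "d = ((a,s),b)" by (metis prod.collapse)
  have h: "a \<in> carrier G" "s \<in> S" "dtail (Cay G S) d = g" "walk (Cay G S) (dhead (Cay G S) d) W y"
    using Cons.prems d by auto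
  show ?case
  proof (cases b)
    case True
    then show ?thesis using h Cons.IH[OF Cons.prems(1) h(4)] d by (auto simp: dtail_Cay dhead_Cay word_of_def)
  next
    case False
    have s: "s \<in> carrier G" using h Cons.prems by auto
    have ga: "a = g \<otimes> inv s" using h s False d by (auto simp: dtail_Cay m_assoc)
    then show ?thesis using h Cons.IH[OF Cons.prems(1) h(4)] d False s by (auto simp: dtail_Cay dhead_Cay word_of_def)
  qed
qed (auto simp: word_of_def)


lemma walk_of_cancel: "g \<in> carrier G \<Longrightarrow> fst d \<in> carrier G \<Longrightarrow>
   (\<exists>D. walk_of G g [d, flip d] = [D, flip D]) \<and> wend G g [d, flip d] = g"
  by (cases d) (auto simp: flip_def m_assoc)

lemma wend_rev: "g \<in> carrier G \<Longrightarrow> set w \<subseteq> carrier G \<times> UNIV \<Longrightarrow> wend G (wend G g w) (rev_walk w) = g"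
proof (induction w arbitrary: g)
  case (Cons x w)
  obtain s b where x: "x = (s,b)" by force
  have s: "s \<in> carrier G" using Cons.prems x by auto
  show ?case using Cons.IH[of "if b then g \<otimes> s else g \<otimes> inv s"] Cons.prems s x
    by (auto simp: rev_walk_Cons wend_append flip_def m_assoc)
qed auto

lemma rev_walk_walk_of: "g \<in> carrier G \<Longrightarrow> set w \<subseteq> carrier G \<times> UNIV \<Longrightarrow>
   rev_walk (walk_of G g w) = walk_of G (wend G g w) (rev_walk w)"
proof (induction w arbitrary: g)
  case (Cons x w)
  obtain s b where x: "x = (s,b)" by force
  have s: "s \<in> carrier G" using Cons.prems x by auto
  define g' where "g' = (if b then g \<otimes> s else g \<otimes> inv s)"
  have g': "g' \<in> carrier G" using s Cons.prems by (auto simp: g'_def)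
  have e: "wend G (wend G g' w) (rev_walk w) = g'" using wend_rev[OF g'] Cons.prems by auto
  show ?case using Cons.IH[OF g'] Cons.prems s x e
    by (auto simp: rev_walk_Cons walk_of_append flip_def m_assoc g'_def)
qed auto

definition tr :: "'a \<Rightarrow> (('a \<times> 'a) \<times> bool) \<Rightarrow> (('a \<times> 'a) \<times> bool)" where
  "tr h d = ((h \<otimes> fst (fst d), snd (fst d)), snd d)"

lemma walk_of_tr: "h \<in> carrier G \<Longrightarrow> g \<in> carrier G \<Longrightarrow> set w \<subseteq> carrier G \<times> UNIV \<Longrightarrow>
   walk_of G (h \<otimes> g) w = map (tr h) (walk_of G g w)"
proof (induction w arbitrary: g)
  case (Cons x w)
  obtain s b where x: "x = (s,b)" by force
  have s: "s \<in> carrier G" using Cons.prems x by auto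
  show ?case using Cons.IH[of "g \<otimes> s"] Cons.IH[of "g \<otimes> inv s"] Cons.prems s x
    by (auto simp: m_assoc tr_def)
qed auto

lemma once_around_translate:
  assumes S: "S \<subseteq> carrier G" and Q: "once_around (Cay G S) y0 Q" and y: "y \<in> carrier G"
  shows "once_around (Cay G S) y (walk_of G y (word_of Q))"
proof -
  have wQ: "walk (Cay G S) y0 Q y0" and ne: "Q \<noteq> []" and d1: "distinct (map fst Q)"
    and d2: "distinct (map (dhead (Cay G S)) Q)"
    using Q by (auto simp: once_around_def)
  have y0: "y0 \<in> carrier G" using walk_start[OF wQ] by simp
  note wi = walk_imp[OF S wQ]
  have wS: "set (word_of Q) \<subseteq> carrier G \<times> UNIV" using wi S by auto
  have ev: "word_eval G (word_of Q) = \<one>"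
    using wi wend_eq[OF y0 wS] y0 word_eval_carrier[OF wS]
    by (metis l_cancel_one' r_one one_closed)
  define h where "h = y \<otimes> inv y0"
  have h: "h \<in> carrier G" using y y0 by (simp add: h_def)
  have hy: "h \<otimes> y0 = y" using y y0 by (simp add: h_def m_assoc)
  have eqQ: "walk_of G y (word_of Q) = map (tr h) Q"
    using walk_of_tr[OF h y0 wS] hy wi by metis
  have wend_y: "wend G y (word_of Q) = y" using wend_eq[OF y wS] ev y by simp
  have walk: "walk (Cay G S) y (walk_of G y (word_of Q)) y"
    using walk_walk_of[OF S y] wi wend_y by metis
  have Ecar: "\<And>d. d \<in> set Q \<Longrightarrow> fst (fst d) \<in> carrier G \<and> snd (fst d) \<in> carrier G"
    using walk_edges[OF wQ] S by fastforce
  have m1: "map fst (map (tr h) Q) = map (\<lambda>e. (h \<otimes> fst e, snd e)) (map fst Q)"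
    by (simp add: tr_def)
  have inj1: "inj_on (\<lambda>e. (h \<otimes> fst e, snd e)) (set (map fst Q))"
    using Ecar h by (auto simp: inj_on_def)
  have m2: "map (dhead (Cay G S)) (map (tr h) Q) = map ((\<otimes>) h) (map (dhead (Cay G S)) Q)"
  proof -
    have "dhead (Cay G S) (tr h d) = h \<otimes> dhead (Cay G S) d" if "d \<in> set Q" for d
      using Ecar[OF that] h by (cases d) (auto simp: tr_def dhead_Cay m_assoc)
    then show ?thesis by simp
  qed
  have inj2: "inj_on ((\<otimes>) h) (set (map (dhead (Cay G S)) Q))"
  proof -
    have "set (map (dhead (Cay G S)) Q) \<subseteq> carrier G"
      using Ecar by (auto simp: dhead_def)
    then show ?thesis using h by (intro inj_onI) (meson l_cancel subsetD)
  qed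
  have D1: "distinct (map fst (map (tr h) Q))" unfolding m1 using d1 inj1 distinct_map by blast
  have D2: "distinct (map (dhead (Cay G S)) (map (tr h) Q))" unfolding m2 using d2 inj2 distinct_map by blast
  show ?thesis unfolding once_around_def using walk ne D1 D2 eqQ by simp
qed

lemma Cay_connected:
  assumes T: "T \<subseteq> carrier G" and gen: "\<And>x. x \<in> carrier G \<Longrightarrow> \<exists>w. set w \<subseteq> T \<times> UNIV \<and> word_eval G w = x"
  shows "connected_graph (Cay G T)"
  unfolding connected_graph_def
proof (intro conjI ballI)
  show "verts (Cay G T) \<noteq> {}" by auto
  fix x y assume xy: "x \<in> verts (Cay G T)" "y \<in> verts (Cay G T)"
  then obtain w where w: "set w \<subseteq> T \<times> UNIV" "word_eval G w = inv x \<otimes> y" using gen[of "inv x \<otimes> y"] xy by auto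
  have wc: "set w \<subseteq> carrier G \<times> UNIV" using w T by auto
  have "wend G x w = y" using wend_eq[of x w] wc w xy by (simp add: m_assoc[symmetric])
  then show "\<exists>W. walk (Cay G T) x W y" using walk_walk_of[OF T _ w(1), of x] xy by auto
qed

lemma Cay_locally_finite:
  assumes T: "T \<subseteq> carrier G" "finite T"
  shows "locally_finite (Cay G T)"
  unfolding locally_finite_def
proof
  fix v assume v: "v \<in> verts (Cay G T)"
  have "{e \<in> edges (Cay G T). fst (ends (Cay G T) e) = v \<or> snd (ends (Cay G T) e) = v}
     \<subseteq> (\<lambda>s. (v,s)) ` T \<union> (\<lambda>s. (v \<otimes> inv s, s)) ` T"
  proof
    fix e assume e: "e \<in> {e \<in> edges (Cay G T). fst (ends (Cay G T) e) = v \<or> snd (ends (Cay G T) e) = v}"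
    obtain a s where es: "e = (a,s)" by force
    have "a \<in> carrier G" "s \<in> T" "a = v \<or> a \<otimes> s = v" using e es by auto
    moreover have "a \<otimes> s = v \<Longrightarrow> a = v \<otimes> inv s" using calculation T by (auto simp: m_assoc)
    ultimately show "e \<in> (\<lambda>s. (v,s)) ` T \<union> (\<lambda>s. (v \<otimes> inv s, s)) ` T" using es by auto
  qed
  then show "finite {e \<in> edges (Cay G T). fst (ends (Cay G T) e) = v \<or> snd (ends (Cay G T) e) = v}"
    using T by (meson finite_Un finite_imageI finite_subset)
qed

end




lemma pe_closure:
  assumes "pres_equiv R a b"
    and rf: "\<And>a. T a a" and sy: "\<And>a b. T a b \<Longrightarrow> T b a"
    and tr: "\<And>a b c. T a b \<Longrightarrow> T b c \<Longrightarrow> T a c"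
    and st: "\<And>a b. pres_step R a b \<Longrightarrow> T a b"
  shows "T a b"
  using assms(1) unfolding pres_equiv_def
proof (induction rule: rtranclp_induct)
  case base then show ?case by (rule rf)
next
  case (step y z)
  have "T y z" using step(2) st sy by blast
  then show ?case using step.IH tr by blast
qed

lemma pe_refl[simp]: "pres_equiv R a a"
  by (simp add: pres_equiv_def)

lemma pe_step: "pres_step R a b \<Longrightarrow> pres_equiv R a b"
  by (auto simp: pres_equiv_def)

lemma pe_trans: "pres_equiv R a b \<Longrightarrow> pres_equiv R b c \<Longrightarrow> pres_equiv R a c"
  unfolding pres_equiv_def by (rule rtranclp_trans)

lemma pe_sym: "pres_equiv R a b \<Longrightarrow> pres_equiv R b a"
  unfolding pres_equiv_def
proof (induction rule: rtranclp_induct)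
  case (step y z)
  have "(\<lambda>A B. pres_step R A B \<or> pres_step R B A) z y" using step(2) by blast
  then show ?case using step.IH by (rule converse_rtranclp_into_rtranclp)
qed simp

lemma pe_step': "pres_step R a b \<Longrightarrow> pres_equiv R b a"
  using pe_step pe_sym by blast

lemma pres_step_cong: "pres_step R a b \<Longrightarrow> pres_step R (x @ a @ y) (x @ b @ y)"
proof -
  assume "pres_step R a b"
  then obtain u v where uv: "b = u @ v" "(\<exists>d. a = u @ [d, flip d] @ v) \<or> (\<exists>\<rho>\<in>R. a = u @ \<rho> @ v)"
    by (auto simp: pres_step_def)
  have "x @ b @ y = (x @ u) @ (v @ y)" using uv by simp
  moreover have "(\<exists>d. x @ a @ y = (x @ u) @ [d, flip d] @ (v @ y)) \<or> (\<exists>\<rho>\<in>R. x @ a @ y = (x @ u) @ \<rho> @ (v @ y))"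
    using uv(2) by auto
  ultimately show ?thesis unfolding pres_step_def by blast
qed

lemma pe_cong: "pres_equiv R a b \<Longrightarrow> pres_equiv R (x @ a @ y) (x @ b @ y)"
  apply (erule pe_closure[where T="\<lambda>a b. pres_equiv R (x @ a @ y) (x @ b @ y)"])
  subgoal by simp
  subgoal using pe_sym by blast
  subgoal using pe_trans by blast
  subgoal using pe_step pres_step_cong by blast
  done

lemma pe_congL: "pres_equiv R a b \<Longrightarrow> pres_equiv R (x @ a) (x @ b)"
  using pe_cong[of R a b x "[]"] by simp

lemma pe_congR: "pres_equiv R a b \<Longrightarrow> pres_equiv R (a @ y) (b @ y)"
  using pe_cong[of R a b "[]" y] by simp

lemma pe_app: "pres_equiv R a b \<Longrightarrow> pres_equiv R c d \<Longrightarrow> pres_equiv R (a @ c) (b @ d)"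
  by (meson pe_congL pe_congR pe_trans)

lemma pe_mono: "pres_equiv R a b \<Longrightarrow> R \<subseteq> R' \<Longrightarrow> pres_equiv R' a b"
  apply (erule pe_closure[where T="\<lambda>a b. pres_equiv R' a b"])
  subgoal by simp
  subgoal using pe_sym by blast
  subgoal using pe_trans by blast
  subgoal for a b using pe_step[of R' a b] unfolding pres_step_def by blast
  done

lemma pe_free: "pres_equiv R (u @ [d, flip d] @ v) (u @ v)"
  by (rule pe_step) (unfold pres_step_def, blast)

lemma pe_free0: "pres_equiv R [d, flip d] []"
  using pe_free[of R "[]" d "[]"] by simp

lemma pe_cancel: "pres_equiv R (w @ rev_walk w) []"
proof (induction w)
  case (Cons d w)
  have "pres_equiv R ([d] @ (w @ rev_walk w) @ [flip d]) ([d] @ [] @ [flip d])"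
    by (rule pe_cong[OF Cons.IH])
  then show ?case using pe_free0[of R d] pe_trans by (fastforce simp: rev_walk_Cons)
qed simp

lemma pe_cancel': "pres_equiv R (rev_walk w @ w) []"
  using pe_cancel[of R "rev_walk w"] by simp

lemma pe_rel: "\<rho> \<in> R \<Longrightarrow> pres_equiv R \<rho> []"
  by (rule pe_step) (auto simp: pres_step_def intro!: exI[of _ "[]"])

lemma pe_nil_rev: "pres_equiv R a [] \<Longrightarrow> pres_equiv R (rev_walk a) []"
proof -
  assume a: "pres_equiv R a []"
  have "pres_equiv R (rev_walk a @ []) (rev_walk a @ a)" using pe_congL[OF pe_sym[OF a]] .
  then show ?thesis using pe_cancel'[of R a] pe_trans by fastforce
qed

lemma pe_rel_rev: "\<rho> \<in> R \<Longrightarrow> pres_equiv R (rev_walk \<rho>) []"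
  using pe_nil_rev pe_rel by blast

lemma pe_conj_nil: "pres_equiv R a [] \<Longrightarrow> pres_equiv R (u @ a @ rev_walk u) []"
  using pe_cong[of R a "[]" u "rev_walk u"] pe_cancel[of R u] pe_trans by fastforce

lemma pe_concat_nil: "(\<And>c. c \<in> set cs \<Longrightarrow> pres_equiv R c []) \<Longrightarrow> pres_equiv R (concat cs) []"
proof (induction cs)
  case (Cons c cs)
  then show ?case using pe_app[of R c "[]" "concat cs" "[]"] by simp
qed simp

lemma pe_nil_eq: "pres_equiv R (a @ rev_walk b) [] \<Longrightarrow> pres_equiv R a b"
proof -
  assume h: "pres_equiv R (a @ rev_walk b) []"
  have "pres_equiv R (a @ []) (a @ rev_walk b @ b)" using pe_congL[OF pe_sym[OF pe_cancel'[of R b]]] .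
  moreover have "pres_equiv R ((a @ rev_walk b) @ b) ([] @ b)" using pe_congR[OF h] .
  ultimately show ?thesis using pe_trans by fastforce
qed

lemma pe_eq_nil: "pres_equiv R a b \<Longrightarrow> pres_equiv R (a @ rev_walk b) []"
  using pe_congR[of R a b "rev_walk b"] pe_cancel[of R b] pe_trans by blast

lemma pe_rev_free: "pres_equiv {} a b \<Longrightarrow> pres_equiv {} (rev_walk a) (rev_walk b)"
  apply (erule pe_closure[where T="\<lambda>a b. pres_equiv {} (rev_walk a) (rev_walk b)"])
  subgoal by simp
  subgoal using pe_sym by blast
  subgoal using pe_trans by blast
proof -
  fix a b assume "pres_step {} a b"
  then obtain u v d where "a = u @ [d, flip d] @ v" "b = u @ v" unfolding pres_step_def by blast
  then show "pres_equiv {} (rev_walk a) (rev_walk b)" using pe_free[of "{}" "rev_walk v" d "rev_walk u"]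
    by (simp add: rev_walk_def flip_def)
qed

lemma pe_map:
  assumes f: "\<And>x. f (flip x) = flip (f x)"
  shows "pres_equiv R a b \<Longrightarrow> pres_equiv (map f ` R) (map f a) (map f b)"
  apply (erule pe_closure[where T="\<lambda>a b. pres_equiv (map f ` R) (map f a) (map f b)"])
  subgoal by simp
  subgoal using pe_sym by blast
  subgoal using pe_trans by blast
proof -
  fix a b assume "pres_step R a b"
  then obtain u v where uv: "b = u @ v" "(\<exists>d. a = u @ [d, flip d] @ v) \<or> (\<exists>\<rho>\<in>R. a = u @ \<rho> @ v)"
    by (auto simp: pres_step_def)
  from uv(2) show "pres_equiv (map f ` R) (map f a) (map f b)"
  proof
    assume "\<exists>d. a = u @ [d, flip d] @ v"
    then obtain d where "a = u @ [d, flip d] @ v" by blast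
    then show ?thesis using uv(1) pe_free[of _ "map f u" "f d" "map f v"] f by simp
  next
    assume "\<exists>\<rho>\<in>R. a = u @ \<rho> @ v"
    then obtain \<rho> where "\<rho> \<in> R" "a = u @ \<rho> @ v" by blast
    then have "map f a = map f u @ map f \<rho> @ map f v" "map f \<rho> \<in> map f ` R" "map f b = map f u @ map f v"
      using uv(1) by auto
    then show ?thesis by (intro pe_step) (unfold pres_step_def, blast)
  qed
qed

lemma homotopic_word: "homotopic A B \<Longrightarrow> pres_equiv {} (word_of A) (word_of B)"
  unfolding homotopic_def
proof (induction rule: rtranclp_induct)
  case (step y z)
  have "pres_equiv {} (word_of y) (word_of z)"
  proof -
    have one: "pres_equiv {} (word_of a) (word_of b)" if bt: "backtrack_step a b" for a b
    proof -
      obtain u v d where "a = u @ [d, flip d] @ v" "b = u @ v" using bt unfolding backtrack_step_def by blast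
      then show ?thesis using pe_free[of "{}" "word_of u" "(snd (fst d), snd d)" "word_of v"]
        by (simp add: word_of_def flip_def)
    qed
    show ?thesis using step(2) one pe_sym by blast
  qed
  then show ?case using step.IH pe_trans by blast
qed simp

lemma homotopic_refl: "homotopic A A" by (simp add: homotopic_def)
lemma homotopic_trans: "homotopic A B \<Longrightarrow> homotopic B C \<Longrightarrow> homotopic A C"
  unfolding homotopic_def by (rule rtranclp_trans)
lemma homotopic_step: "backtrack_step A B \<Longrightarrow> homotopic A B"
  unfolding homotopic_def by (simp add: r_into_rtranclp)
lemma homotopic_step': "backtrack_step A B \<Longrightarrow> homotopic B A"
  unfolding homotopic_def by (metis (mono_tags, lifting) r_into_rtranclp)




lemma homotopic_sym: "homotopic A B \<Longrightarrow> homotopic B A"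
  unfolding homotopic_def
proof (induction rule: rtranclp_induct)
  case (step y z)
  have "(\<lambda>A B. backtrack_step A B \<or> backtrack_step B A) z y" using step(2) by blast
  then show ?case using step.IH by (rule converse_rtranclp_into_rtranclp)
qed simp

lemma fst_flip[simp]: "fst (flip d) = fst d"
  by (simp add: flip_def)

lemma filt_Cons[simp]: "filt S (d # w) = (if fst d \<in> S then d # filt S w else filt S w)"
  by (simp add: filt_def)

lemma filt_Nil[simp]: "filt S [] = []"
  by (simp add: filt_def)

lemma filt_pair: "filt S [d, flip d] = (if fst d \<in> S then [d, flip d] else [])"
  by (simp add: filt_def flip_def)

locale lc = group \<Gamma> for \<Gamma> :: "'a monoid" (structure) +
  fixes S :: "'a set" and r :: nat and x0 :: 'a
  assumes S_sub: "S \<subseteq> carrier \<Gamma>" and x0: "x0 \<in> carrier \<Gamma>"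
begin

definition Rel :: "('a \<times> bool) list set" where
  "Rel = {word_of Q | Q y. once_around (Cay \<Gamma> S) y Q \<and> length Q \<le> r}"

definition N0 :: "('a \<times> bool) list set" where
  "N0 = {u @ \<rho> @ rev_walk u | u \<rho>. set u \<subseteq> S \<times> UNIV \<and> \<rho> \<in> Rel}
      \<union> {u @ rev_walk \<rho> @ rev_walk u | u \<rho>. set u \<subseteq> S \<times> UNIV \<and> \<rho> \<in> Rel}"

definition Tr :: "('a \<times> bool) list \<Rightarrow> ('a \<times> bool) list \<Rightarrow> bool" where
  "Tr a b \<longleftrightarrow> (\<exists>cs. set cs \<subseteq> N0 \<and> pres_equiv {} (filt S a @ rev_walk (filt S b)) (concat cs))"

lemma Sw_car: "set w \<subseteq> S \<times> UNIV \<Longrightarrow> set w \<subseteq> carrier \<Gamma> \<times> UNIV"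
  using S_sub by auto

lemma Rel_props:
  assumes "\<rho> \<in> Rel"
  shows "set \<rho> \<subseteq> S \<times> UNIV" "word_eval \<Gamma> \<rho> = \<one>" "length \<rho> \<le> r"
    "\<And>y. y \<in> carrier \<Gamma> \<Longrightarrow> once_around (Cay \<Gamma> S) y (walk_of \<Gamma> y \<rho>)"
    "\<And>y. y \<in> carrier \<Gamma> \<Longrightarrow> wend \<Gamma> y \<rho> = y"
proof -
  obtain Q y0 where Q: "\<rho> = word_of Q" "once_around (Cay \<Gamma> S) y0 Q" "length Q \<le> r"
    using assms by (auto simp: Rel_def)
  have wQ: "walk (Cay \<Gamma> S) y0 Q y0" using Q by (auto simp: once_around_def)
  have y0: "y0 \<in> carrier \<Gamma>" using walk_start[OF wQ] by simp
  note wi = walk_imp[OF S_sub wQ]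
  show S1: "set \<rho> \<subseteq> S \<times> UNIV" using wi Q by simp
  have wS: "set \<rho> \<subseteq> carrier \<Gamma> \<times> UNIV" using Sw_car[OF S1] .
  show ev: "word_eval \<Gamma> \<rho> = \<one>"
    using wi wend_eq[OF y0 wS] y0 word_eval_carrier[OF wS] Q(1)
    by (metis l_cancel_one' r_one one_closed)
  show "length \<rho> \<le> r" using Q by (simp add: word_of_def)
  show "\<And>y. y \<in> carrier \<Gamma> \<Longrightarrow> once_around (Cay \<Gamma> S) y (walk_of \<Gamma> y \<rho>)"
    using once_around_translate[OF S_sub Q(2)] Q(1) by simp
  show "\<And>y. y \<in> carrier \<Gamma> \<Longrightarrow> wend \<Gamma> y \<rho> = y"
    using wend_eq ev wS by simp
qed

lemma N0_cases: "c \<in> N0 \<Longrightarrow> (\<And>u \<rho>. set u \<subseteq> S \<times> UNIV \<Longrightarrow> \<rho> \<in> Rel \<Longrightarrow>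
   c = u @ \<rho> @ rev_walk u \<or> c = u @ rev_walk \<rho> @ rev_walk u \<Longrightarrow> P) \<Longrightarrow> P"
  unfolding N0_def by blast

lemma N0_I1: "set u \<subseteq> S \<times> UNIV \<Longrightarrow> \<rho> \<in> Rel \<Longrightarrow> u @ \<rho> @ rev_walk u \<in> N0"
  unfolding N0_def by blast

lemma N0_I2: "set u \<subseteq> S \<times> UNIV \<Longrightarrow> \<rho> \<in> Rel \<Longrightarrow> u @ rev_walk \<rho> @ rev_walk u \<in> N0"
  unfolding N0_def by blast

lemma N0_S: "c \<in> N0 \<Longrightarrow> set c \<subseteq> S \<times> UNIV"
proof (erule N0_cases)
  fix u \<rho> assume u: "set u \<subseteq> S \<times> UNIV" "\<rho> \<in> Rel" and c: "c = u @ \<rho> @ rev_walk u \<or> c = u @ rev_walk \<rho> @ rev_walk u"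
  have "set \<rho> \<subseteq> S \<times> UNIV" using Rel_props(1)[OF u(2)] .
  then show "set c \<subseteq> S \<times> UNIV" using c u(1) rev_walk_set[of u S] rev_walk_set[of \<rho> S] by auto
qed

lemma N0_rev: "c \<in> N0 \<Longrightarrow> rev_walk c \<in> N0"
proof (erule N0_cases)
  fix u \<rho> assume u: "set u \<subseteq> S \<times> UNIV" "\<rho> \<in> Rel" and c: "c = u @ \<rho> @ rev_walk u \<or> c = u @ rev_walk \<rho> @ rev_walk u"
  from c show "rev_walk c \<in> N0"
  proof
    assume "c = u @ \<rho> @ rev_walk u"
    then have "rev_walk c = u @ rev_walk \<rho> @ rev_walk u" by simp
    then show ?thesis using N0_I2[OF u] by simp
  next
    assume "c = u @ rev_walk \<rho> @ rev_walk u"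
    then have "rev_walk c = u @ \<rho> @ rev_walk u" by simp
    then show ?thesis using N0_I1[OF u] by simp
  qed
qed

lemma N0_closed: "c \<in> N0 \<Longrightarrow> y \<in> carrier \<Gamma> \<Longrightarrow> wend \<Gamma> y c = y"
proof -
  assume c: "c \<in> N0" and y: "y \<in> carrier \<Gamma>"
  then obtain u \<rho> where u: "set u \<subseteq> S \<times> UNIV" "\<rho> \<in> Rel" and
    cc: "c = u @ \<rho> @ rev_walk u \<or> c = u @ rev_walk \<rho> @ rev_walk u"
    unfolding N0_def by blast
  have uc: "set u \<subseteq> carrier \<Gamma> \<times> UNIV" using Sw_car[OF u(1)] .
  have rc: "set \<rho> \<subseteq> carrier \<Gamma> \<times> UNIV" using Sw_car[OF Rel_props(1)[OF u(2)]] .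
  define z where "z = wend \<Gamma> y u"
  have z: "z \<in> carrier \<Gamma>" using wend_carrier[OF y uc] z_def by simp
  have r1: "wend \<Gamma> z \<rho> = z" using Rel_props(5)[OF u(2) z] .
  have r2: "wend \<Gamma> z (rev_walk \<rho>) = z" using wend_rev[OF z rc] r1 by simp
  have bk: "wend \<Gamma> z (rev_walk u) = y" using wend_rev[OF y uc] z_def by simp
  have wu: "wend \<Gamma> y u = z" by (simp add: z_def)
  from cc show ?thesis
  proof
    assume "c = u @ \<rho> @ rev_walk u"
    then show ?thesis by (simp only: wend_append wu r1 bk)
  next
    assume "c = u @ rev_walk \<rho> @ rev_walk u"
    then show ?thesis by (simp only: wend_append wu r2 bk)
  qed
qed

lemma walk_of_concat: "(\<And>c. c \<in> set cs \<Longrightarrow> wend \<Gamma> g c = g) \<Longrightarrow>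
   walk_of \<Gamma> g (concat cs) = concat (map (walk_of \<Gamma> g) cs)"
  by (induction cs) (auto simp: walk_of_append)

lemma N0_gen: "c \<in> N0 \<Longrightarrow> pi1r_gen (Cay \<Gamma> S) r x0 (walk_of \<Gamma> x0 c)
    \<or> pi1r_gen (Cay \<Gamma> S) r x0 (rev_walk (walk_of \<Gamma> x0 c))"
proof -
  assume c: "c \<in> N0"
  then obtain u \<rho> where u: "set u \<subseteq> S \<times> UNIV" "\<rho> \<in> Rel" and
    cc: "c = u @ \<rho> @ rev_walk u \<or> c = u @ rev_walk \<rho> @ rev_walk u"
    unfolding N0_def by blast
  have uc: "set u \<subseteq> carrier \<Gamma> \<times> UNIV" using Sw_car[OF u(1)] .
  have rc: "set \<rho> \<subseteq> carrier \<Gamma> \<times> UNIV" using Sw_car[OF Rel_props(1)[OF u(2)]] .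
  define y where "y = wend \<Gamma> x0 u"
  define U where "U = walk_of \<Gamma> x0 u"
  have y: "y \<in> carrier \<Gamma>" using wend_carrier[OF x0 uc] y_def by simp
  have r1: "wend \<Gamma> y \<rho> = y" using Rel_props(5)[OF u(2) y] .
  have r2: "wend \<Gamma> y (rev_walk \<rho>) = y" using wend_rev[OF y rc] r1 by simp
  have rU: "walk_of \<Gamma> y (rev_walk u) = rev_walk U"
    using rev_walk_walk_of[OF x0 uc] by (simp add: U_def y_def)
  have wU: "walk (Cay \<Gamma> S) x0 U y" using walk_walk_of[OF S_sub x0 u(1)] by (simp add: U_def y_def)
  have Q: "once_around (Cay \<Gamma> S) y (walk_of \<Gamma> y \<rho>)" "length (walk_of \<Gamma> y \<rho>) \<le> r"
    using Rel_props(4)[OF u(2) y] Rel_props(3)[OF u(2)] by auto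
  have gen: "pi1r_gen (Cay \<Gamma> S) r x0 (U @ walk_of \<Gamma> y \<rho> @ rev_walk U)"
    unfolding pi1r_gen_def using wU Q by blast
  show ?thesis
  proof (cases "c = u @ \<rho> @ rev_walk u")
    case True
    have "walk_of \<Gamma> x0 c = U @ walk_of \<Gamma> y \<rho> @ rev_walk U"
      using True r1 rU by (simp add: walk_of_append U_def y_def[symmetric])
    then show ?thesis using gen by simp
  next
    case False
    then have c2: "c = u @ rev_walk \<rho> @ rev_walk u" using cc by blast
    have "walk_of \<Gamma> x0 c = U @ walk_of \<Gamma> y (rev_walk \<rho>) @ rev_walk U"
      using c2 r2 rU by (simp add: walk_of_append U_def y_def[symmetric])
    moreover have "rev_walk (walk_of \<Gamma> y (rev_walk \<rho>)) = walk_of \<Gamma> y \<rho>"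
      using rev_walk_walk_of[OF y rev_walk_set[OF rc]] r2 by simp
    ultimately have "rev_walk (walk_of \<Gamma> x0 c) = U @ walk_of \<Gamma> y \<rho> @ rev_walk U" by simp
    then show ?thesis using gen by simp
  qed
qed

lemma eval_pair: "fst d \<in> carrier \<Gamma> \<Longrightarrow> word_eval \<Gamma> [d, flip d] = \<one>"
  by (cases d) (auto simp: flip_def)

lemma pe_eval: "pres_equiv Rel a b \<Longrightarrow> word_eval \<Gamma> (filt S a) = word_eval \<Gamma> (filt S b)"
  apply (erule pe_closure[where T="\<lambda>a b. word_eval \<Gamma> (filt S a) = word_eval \<Gamma> (filt S b)"])
  subgoal by simp
  subgoal by simp
  subgoal by simp
proof -
  fix a b assume "pres_step Rel a b"
  then obtain u v where uv: "b = u @ v" "(\<exists>d. a = u @ [d, flip d] @ v) \<or> (\<exists>\<rho>\<in>Rel. a = u @ \<rho> @ v)"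
    by (auto simp: pres_step_def)
  have fu: "set (filt S u) \<subseteq> carrier \<Gamma> \<times> UNIV" "set (filt S v) \<subseteq> carrier \<Gamma> \<times> UNIV"
    using Sw_car[OF filt_set] by auto
  from uv(2) show "word_eval \<Gamma> (filt S a) = word_eval \<Gamma> (filt S b)"
  proof
    assume "\<exists>d. a = u @ [d, flip d] @ v"
    then obtain d where d: "a = u @ [d, flip d] @ v" by blast
    show ?thesis
    proof (cases "fst d \<in> S")
      case True
      have dc: "set [d, flip d] \<subseteq> carrier \<Gamma> \<times> UNIV" using True S_sub by (cases d) (auto simp: flip_def)
      have fa: "filt S a = filt S u @ ([d, flip d] @ filt S v)" using d True by simp
      have e1: "word_eval \<Gamma> (filt S u @ ([d, flip d] @ filt S v)) = word_eval \<Gamma> (filt S u) \<otimes> word_eval \<Gamma> ([d, flip d] @ filt S v)"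
        by (rule word_eval_append) (use fu dc in auto)
      have e2: "word_eval \<Gamma> ([d, flip d] @ filt S v) = word_eval \<Gamma> [d, flip d] \<otimes> word_eval \<Gamma> (filt S v)"
        by (rule word_eval_append) (use fu dc in auto)
      have dS: "fst d \<in> carrier \<Gamma>" using True S_sub by auto
      have "word_eval \<Gamma> (filt S a) = word_eval \<Gamma> (filt S u) \<otimes> (\<one> \<otimes> word_eval \<Gamma> (filt S v))"
        unfolding fa e1 e2 eval_pair[OF dS] ..
      also have "\<dots> = word_eval \<Gamma> (filt S b)"
        using uv(1) fu word_eval_carrier[OF fu(2)] by (simp add: word_eval_append)
      finally show ?thesis .
    next
      case False
      then show ?thesis using d uv(1) by (simp add: filt_pair)
    qed
  next
    assume "\<exists>\<rho>\<in>Rel. a = u @ \<rho> @ v"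
    then obtain \<rho> where r: "\<rho> \<in> Rel" "a = u @ \<rho> @ v" by blast
    have "filt S a = filt S u @ \<rho> @ filt S v" using r filt_id[OF Rel_props(1)[OF r(1)]] by simp
    then show ?thesis using uv(1) fu Sw_car[OF Rel_props(1)[OF r(1)]] Rel_props(2)[OF r(1)]
      by (simp add: word_eval_append word_eval_carrier)
  qed
qed

lemma Tr_refl: "Tr a a"
  unfolding Tr_def using pe_cancel by (metis concat.simps(1) empty_set empty_subsetI)

lemma Tr_sym: "Tr a b \<Longrightarrow> Tr b a"
proof -
  assume "Tr a b"
  then obtain cs where cs: "set cs \<subseteq> N0" "pres_equiv {} (filt S a @ rev_walk (filt S b)) (concat cs)"
    by (auto simp: Tr_def)
  have "pres_equiv {} (filt S b @ rev_walk (filt S a)) (concat (rev (map rev_walk cs)))"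
    using pe_rev_free[OF cs(2)] by (simp add: rev_walk_concat)
  moreover have "set (rev (map rev_walk cs)) \<subseteq> N0" using cs(1) N0_rev by auto
  ultimately show ?thesis unfolding Tr_def by blast
qed

lemma Tr_trans: "Tr a b \<Longrightarrow> Tr b c \<Longrightarrow> Tr a c"
proof -
  assume "Tr a b" "Tr b c"
  then obtain cs1 cs2 where cs: "set cs1 \<subseteq> N0" "pres_equiv {} (filt S a @ rev_walk (filt S b)) (concat cs1)"
     "set cs2 \<subseteq> N0" "pres_equiv {} (filt S b @ rev_walk (filt S c)) (concat cs2)"
    by (auto simp: Tr_def)
  have "pres_equiv {} (filt S a @ [] @ rev_walk (filt S c)) (filt S a @ (rev_walk (filt S b) @ filt S b) @ rev_walk (filt S c))"
    by (rule pe_cong[OF pe_sym[OF pe_cancel']])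
  moreover have "pres_equiv {} ((filt S a @ rev_walk (filt S b)) @ (filt S b @ rev_walk (filt S c))) (concat cs1 @ concat cs2)"
    by (rule pe_app[OF cs(2) cs(4)])
  ultimately have "pres_equiv {} (filt S a @ rev_walk (filt S c)) (concat (cs1 @ cs2))"
    using pe_trans by fastforce
  then show ?thesis unfolding Tr_def using cs(1,3) by (metis le_sup_iff set_append)
qed

lemma Tr_step: "pres_step Rel a b \<Longrightarrow> Tr a b"
proof -
  assume "pres_step Rel a b"
  then obtain u v where uv: "b = u @ v" "(\<exists>d. a = u @ [d, flip d] @ v) \<or> (\<exists>\<rho>\<in>Rel. a = u @ \<rho> @ v)"
    by (auto simp: pres_step_def)
  from uv(2) show ?thesis
  proof
    assume "\<exists>d. a = u @ [d, flip d] @ v"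
    then obtain d where d: "a = u @ [d, flip d] @ v" by blast
    have "pres_equiv {} (filt S a) (filt S b)"
      using d uv(1) pe_free[of "{}" "filt S u" d "filt S v"] by (simp add: filt_pair)
    then have "pres_equiv {} (filt S a @ rev_walk (filt S b)) []"
      using pe_eq_nil by blast
    then show ?thesis unfolding Tr_def by (metis concat.simps(1) empty_set empty_subsetI)
  next
    assume "\<exists>\<rho>\<in>Rel. a = u @ \<rho> @ v"
    then obtain \<rho> where r: "\<rho> \<in> Rel" "a = u @ \<rho> @ v" by blast
    have fa: "filt S a = filt S u @ \<rho> @ filt S v" using r filt_id[OF Rel_props(1)[OF r(1)]] by simp
    have "pres_equiv {} ((filt S u @ \<rho>) @ (filt S v @ rev_walk (filt S v)) @ rev_walk (filt S u))
       ((filt S u @ \<rho>) @ [] @ rev_walk (filt S u))"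
      by (rule pe_cong[OF pe_cancel])
    then have "pres_equiv {} (filt S a @ rev_walk (filt S b)) (concat [filt S u @ \<rho> @ rev_walk (filt S u)])"
      using fa uv(1) by simp
    moreover have "filt S u @ \<rho> @ rev_walk (filt S u) \<in> N0"
      using N0_I1[OF filt_set r(1)] .
    ultimately show ?thesis unfolding Tr_def by (metis empty_set empty_subsetI insert_subset list.simps(15))
  qed
qed

lemma pe_Tr: "pres_equiv Rel a b \<Longrightarrow> Tr a b"
  apply (erule pe_closure[where T=Tr])
  subgoal by (rule Tr_refl)
  subgoal by (erule Tr_sym)
  subgoal by (erule Tr_trans)
  subgoal by (erule Tr_step)
  done

lemma free_hom: "pres_equiv {} a b \<Longrightarrow> g \<in> carrier \<Gamma> \<Longrightarrow>
   homotopic (walk_of \<Gamma> g (filt S a)) (walk_of \<Gamma> g (filt S b))"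
  apply (erule pe_closure[where T="\<lambda>a b. homotopic (walk_of \<Gamma> g (filt S a)) (walk_of \<Gamma> g (filt S b))"])
  subgoal by (rule homotopic_refl)
  subgoal by (rule homotopic_sym)
  subgoal by (rule homotopic_trans)
proof -
  fix a b :: "('a \<times> bool) list" assume g: "g \<in> carrier \<Gamma>" and "pres_step {} a b"
  then obtain u v d where uv: "b = u @ v" "a = u @ [d, flip d] @ v"
    unfolding pres_step_def by blast
  show "homotopic (walk_of \<Gamma> g (filt S a)) (walk_of \<Gamma> g (filt S b))"
  proof (cases "fst d \<in> S")
    case True
    define y where "y = wend \<Gamma> g (filt S u)"
    have y: "y \<in> carrier \<Gamma>" using wend_carrier[OF g Sw_car[OF filt_set]] y_def by simp
    obtain D where D: "walk_of \<Gamma> y [d, flip d] = [D, flip D]" "wend \<Gamma> y [d, flip d] = y"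
      using walk_of_cancel[OF y] True S_sub by blast
    have fa: "filt S a = filt S u @ ([d, flip d] @ filt S v)" using uv True by simp
    have "walk_of \<Gamma> g (filt S a) = walk_of \<Gamma> g (filt S u) @ [D, flip D] @ walk_of \<Gamma> y (filt S v)"
      unfolding fa walk_of_append[of \<Gamma> g "filt S u"] y_def[symmetric] walk_of_append[of \<Gamma> y "[d, flip d]"] D ..
    moreover have "walk_of \<Gamma> g (filt S b) = walk_of \<Gamma> g (filt S u) @ walk_of \<Gamma> y (filt S v)"
      using uv by (simp add: walk_of_append y_def)
    ultimately show ?thesis by (intro homotopic_step) (unfold backtrack_step_def, blast)
  next
    case False
    then show ?thesis using uv by (simp add: filt_pair homotopic_refl)
  qed
qed

end




context lc
begin

lemma gen_word: "pi1r_gen (Cay \<Gamma> S) r x0 c \<Longrightarrow> pres_equiv Rel (word_of c) []"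
proof -
  assume "pi1r_gen (Cay \<Gamma> S) r x0 c"
  then obtain W0 y Q where h: "walk (Cay \<Gamma> S) x0 W0 y" "once_around (Cay \<Gamma> S) y Q" "length Q \<le> r"
    "c = W0 @ Q @ rev_walk W0" unfolding pi1r_gen_def by blast
  have "word_of Q \<in> Rel" unfolding Rel_def using h by blast
  then have "pres_equiv Rel (word_of W0 @ word_of Q @ rev_walk (word_of W0)) []"
    by (intro pe_conj_nil pe_rel)
  then show ?thesis using h(4) by (simp add: word_of_rev_walk)
qed

lemma key1:
  assumes w: "set w \<subseteq> S \<times> UNIV" and w': "set w' \<subseteq> S \<times> UNIV"
  shows "cover_rel (Cay \<Gamma> S) r x0 (walk_of \<Gamma> x0 w) (walk_of \<Gamma> x0 w') \<longleftrightarrow> pres_equiv Rel w w'"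
proof
  assume "cover_rel (Cay \<Gamma> S) r x0 (walk_of \<Gamma> x0 w) (walk_of \<Gamma> x0 w')"
  then obtain cs where cs: "\<forall>c\<in>set cs. pi1r_gen (Cay \<Gamma> S) r x0 c \<or> pi1r_gen (Cay \<Gamma> S) r x0 (rev_walk c)"
    "homotopic (walk_of \<Gamma> x0 w @ rev_walk (walk_of \<Gamma> x0 w')) (concat cs)"
    unfolding cover_rel_def in_pi1r_def by blast
  have "pres_equiv {} (w @ rev_walk w') (concat (map word_of cs))"
    using homotopic_word[OF cs(2)] by (simp add: word_of_rev_walk word_of_walk_of word_of_concat)
  then have 1: "pres_equiv Rel (w @ rev_walk w') (concat (map word_of cs))" using pe_mono by blast
  have "pres_equiv Rel (word_of c) []" if c: "c \<in> set cs" for c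
  proof -
    from cs(1) c have "pi1r_gen (Cay \<Gamma> S) r x0 c \<or> pi1r_gen (Cay \<Gamma> S) r x0 (rev_walk c)" by blast
    then show ?thesis
    proof
      assume "pi1r_gen (Cay \<Gamma> S) r x0 (rev_walk c)"
      then have "pres_equiv Rel (rev_walk (word_of c)) []" using gen_word word_of_rev_walk by metis
      then show ?thesis using pe_nil_rev by fastforce
    qed (rule gen_word)
  qed
  then have "pres_equiv Rel (concat (map word_of cs)) []" by (intro pe_concat_nil) auto
  then have "pres_equiv Rel (w @ rev_walk w') []" using 1 pe_trans by blast
  then show "pres_equiv Rel w w'" by (rule pe_nil_eq)
next
  assume pe: "pres_equiv Rel w w'"
  have wc: "set w \<subseteq> carrier \<Gamma> \<times> UNIV" "set w' \<subseteq> carrier \<Gamma> \<times> UNIV" using Sw_car w w' by auto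
  have "word_eval \<Gamma> w = word_eval \<Gamma> w'" using pe_eval[OF pe] filt_id[OF w] filt_id[OF w'] by simp
  then have ye: "wend \<Gamma> x0 w = wend \<Gamma> x0 w'" using wend_eq[OF x0] wc by simp
  define y where "y = wend \<Gamma> x0 w'"
  have y: "y \<in> carrier \<Gamma>" using wend_carrier[OF x0 wc(2)] y_def by simp
  have W: "walk (Cay \<Gamma> S) x0 (walk_of \<Gamma> x0 w) y" using walk_walk_of[OF S_sub x0 w] ye y_def by simp
  have W': "walk (Cay \<Gamma> S) x0 (walk_of \<Gamma> x0 w') y" using walk_walk_of[OF S_sub x0 w'] y_def by simp
  have rw: "rev_walk (walk_of \<Gamma> x0 w') = walk_of \<Gamma> y (rev_walk w')"
    using rev_walk_walk_of[OF x0 wc(2)] y_def by simp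
  have eqW: "walk_of \<Gamma> x0 w @ rev_walk (walk_of \<Gamma> x0 w') = walk_of \<Gamma> x0 (w @ rev_walk w')"
    using rw ye y_def by (simp add: walk_of_append)
  have we: "wend \<Gamma> x0 (w @ rev_walk w') = x0"
    using wend_rev[OF x0 wc(2)] ye by (simp add: wend_append)
  have ww: "set (w @ rev_walk w') \<subseteq> S \<times> UNIV" using w rev_walk_set[OF w'] by auto
  have closed: "walk (Cay \<Gamma> S) x0 (walk_of \<Gamma> x0 w @ rev_walk (walk_of \<Gamma> x0 w')) x0"
    using walk_walk_of[OF S_sub x0 ww] eqW we by simp
  obtain cs where cs: "set cs \<subseteq> N0" "pres_equiv {} (filt S w @ rev_walk (filt S w')) (concat cs)"
    using pe_Tr[OF pe] unfolding Tr_def by blast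
  have csS: "set (concat cs) \<subseteq> S \<times> UNIV" using cs(1) N0_S by auto
  have "pres_equiv {} (w @ rev_walk w') (concat cs)" using cs(2) filt_id[OF w] filt_id[OF w'] by simp
  then have "homotopic (walk_of \<Gamma> x0 (w @ rev_walk w')) (walk_of \<Gamma> x0 (concat cs))"
    using free_hom[OF _ x0] filt_id[OF ww] filt_id[OF csS] by metis
  moreover have "walk_of \<Gamma> x0 (concat cs) = concat (map (walk_of \<Gamma> x0) cs)"
    using walk_of_concat N0_closed[OF _ x0] cs(1) by auto
  ultimately have hom: "homotopic (walk_of \<Gamma> x0 w @ rev_walk (walk_of \<Gamma> x0 w')) (concat (map (walk_of \<Gamma> x0) cs))"
    using eqW by simp
  have "\<forall>c\<in>set (map (walk_of \<Gamma> x0) cs). pi1r_gen (Cay \<Gamma> S) r x0 c \<or> pi1r_gen (Cay \<Gamma> S) r x0 (rev_walk c)"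
    using N0_gen cs(1) by auto
  then have "in_pi1r (Cay \<Gamma> S) r x0 (walk_of \<Gamma> x0 w @ rev_walk (walk_of \<Gamma> x0 w'))"
    unfolding in_pi1r_def using closed hom by blast
  then show "cover_rel (Cay \<Gamma> S) r x0 (walk_of \<Gamma> x0 w) (walk_of \<Gamma> x0 w')"
    unfolding cover_rel_def using W W' by blast
qed

definition Sw :: "('a \<times> bool) list set" where "Sw = {w. set w \<subseteq> S \<times> UNIV}"

definition cls :: "('a \<times> bool) list \<Rightarrow> (('a \<times> 'a) \<times> bool) list set" where
  "cls w = cover_class (Cay \<Gamma> S) r x0 (walk_of \<Gamma> x0 w)"

lemma cls_mem: "w \<in> Sw \<Longrightarrow> W' \<in> cls w \<longleftrightarrow> (\<exists>w'. w' \<in> Sw \<and> W' = walk_of \<Gamma> x0 w' \<and> pres_equiv Rel w w')"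
proof
  assume w: "w \<in> Sw" and "W' \<in> cls w"
  then have cr: "cover_rel (Cay \<Gamma> S) r x0 (walk_of \<Gamma> x0 w) W'" by (simp add: cls_def cover_class_def)
  then obtain y where "walk (Cay \<Gamma> S) x0 W' y" unfolding cover_rel_def by blast
  note wi = walk_imp[OF S_sub this]
  have "pres_equiv Rel w (word_of W')" using key1[of w "word_of W'"] w wi cr by (simp add: Sw_def)
  then show "\<exists>w'. w' \<in> Sw \<and> W' = walk_of \<Gamma> x0 w' \<and> pres_equiv Rel w w'" using wi by (auto simp: Sw_def)
next
  assume w: "w \<in> Sw" and "\<exists>w'. w' \<in> Sw \<and> W' = walk_of \<Gamma> x0 w' \<and> pres_equiv Rel w w'"
  then show "W' \<in> cls w" using key1 by (auto simp: cls_def cover_class_def Sw_def)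
qed

lemma self_mem: "w \<in> Sw \<Longrightarrow> walk_of \<Gamma> x0 w \<in> cls w"
  using cls_mem by auto

lemma cls_eq: "w \<in> Sw \<Longrightarrow> w' \<in> Sw \<Longrightarrow> cls w = cls w' \<longleftrightarrow> pres_equiv Rel w w'"
proof
  assume w: "w \<in> Sw" "w' \<in> Sw" and "cls w = cls w'"
  then have "walk_of \<Gamma> x0 w' \<in> cls w" using self_mem by simp
  then obtain w'' where "w'' \<in> Sw" "walk_of \<Gamma> x0 w' = walk_of \<Gamma> x0 w''" "pres_equiv Rel w w''"
    using cls_mem w by blast
  then show "pres_equiv Rel w w'" using word_of_walk_of by metis
next
  assume w: "w \<in> Sw" "w' \<in> Sw" and pe: "pres_equiv Rel w w'"
  have "W \<in> cls w \<longleftrightarrow> W \<in> cls w'" for W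
      using cls_mem[OF w(1)] cls_mem[OF w(2)] pe pe_sym pe_trans by meson
  then show "cls w = cls w'" by blast
qed

definition rep :: "(('a \<times> 'a) \<times> bool) list set \<Rightarrow> ('a \<times> bool) list" where
  "rep C = (SOME w. w \<in> Sw \<and> cls w = C)"

lemma rep_cls: "w \<in> Sw \<Longrightarrow> rep (cls w) \<in> Sw \<and> cls (rep (cls w)) = cls w"
  unfolding rep_def by (rule someI) auto

definition Gr :: "((('a \<times> 'a) \<times> bool) list set) monoid" where
  "Gr = \<lparr>carrier = cls ` Sw, monoid.mult = (\<lambda>C D. cls (rep C @ rep D)), one = cls []\<rparr>"

lemma Sw_app: "a \<in> Sw \<Longrightarrow> b \<in> Sw \<Longrightarrow> a @ b \<in> Sw"
  by (auto simp: Sw_def)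

lemma Sw_rev: "a \<in> Sw \<Longrightarrow> rev_walk a \<in> Sw"
  using rev_walk_set by (auto simp: Sw_def)

lemma Gr_simps: "carrier Gr = cls ` Sw" "one Gr = cls []" "monoid.mult Gr C D = cls (rep C @ rep D)"
  by (simp_all add: Gr_def)

lemma mult_cls: "a \<in> Sw \<Longrightarrow> b \<in> Sw \<Longrightarrow> cls a \<otimes>\<^bsub>Gr\<^esub> cls b = cls (a @ b)"
proof -
  assume a: "a \<in> Sw" and b: "b \<in> Sw"
  have "pres_equiv Rel (rep (cls a)) a" using rep_cls[OF a] cls_eq[OF _ a] by blast
  moreover have "pres_equiv Rel (rep (cls b)) b" using rep_cls[OF b] cls_eq[OF _ b] by blast
  ultimately have "pres_equiv Rel (rep (cls a) @ rep (cls b)) (a @ b)" by (rule pe_app)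
  then show ?thesis using cls_eq Sw_app rep_cls a b by (simp add: Gr_simps)
qed

lemma Nil_Sw: "[] \<in> Sw" by (simp add: Sw_def)

lemma group_Gr: "group Gr"
proof (rule groupI)
  fix x y assume "x \<in> carrier Gr" "y \<in> carrier Gr"
  then obtain a b where "a \<in> Sw" "b \<in> Sw" "x = cls a" "y = cls b" by (auto simp: Gr_simps)
  then show "x \<otimes>\<^bsub>Gr\<^esub> y \<in> carrier Gr" using mult_cls Sw_app by (simp add: Gr_simps)
next
  show "\<one>\<^bsub>Gr\<^esub> \<in> carrier Gr" using Nil_Sw by (simp add: Gr_simps)
next
  fix x y z assume "x \<in> carrier Gr" "y \<in> carrier Gr" "z \<in> carrier Gr"
  then obtain a b c where "a \<in> Sw" "b \<in> Sw" "c \<in> Sw" "x = cls a" "y = cls b" "z = cls c" by (auto simp: Gr_simps)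
  then show "x \<otimes>\<^bsub>Gr\<^esub> y \<otimes>\<^bsub>Gr\<^esub> z = x \<otimes>\<^bsub>Gr\<^esub> (y \<otimes>\<^bsub>Gr\<^esub> z)" using mult_cls Sw_app by simp
next
  fix x assume "x \<in> carrier Gr"
  then obtain a where "a \<in> Sw" "x = cls a" by (auto simp: Gr_simps)
  then show "\<one>\<^bsub>Gr\<^esub> \<otimes>\<^bsub>Gr\<^esub> x = x" using mult_cls[OF Nil_Sw] by (simp add: Gr_simps[symmetric])
next
  fix x assume "x \<in> carrier Gr"
  then obtain a where a: "a \<in> Sw" "x = cls a" by (auto simp: Gr_simps)
  have "cls (rev_walk a) \<otimes>\<^bsub>Gr\<^esub> x = \<one>\<^bsub>Gr\<^esub>"
    using a mult_cls[OF Sw_rev[OF a(1)] a(1)] cls_eq[OF Sw_app[OF Sw_rev[OF a(1)] a(1)] Nil_Sw] pe_cancel'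
    by (simp add: Gr_simps)
  then show "\<exists>y\<in>carrier Gr. y \<otimes>\<^bsub>Gr\<^esub> x = \<one>\<^bsub>Gr\<^esub>" using Sw_rev[OF a(1)] by (auto simp: Gr_simps)
qed

end




context lc
begin

lemma pe_wend: "w \<in> Sw \<Longrightarrow> w' \<in> Sw \<Longrightarrow> pres_equiv Rel w w' \<Longrightarrow> g \<in> carrier \<Gamma> \<Longrightarrow> wend \<Gamma> g w = wend \<Gamma> g w'"
proof -
  assume a: "w \<in> Sw" "w' \<in> Sw" "pres_equiv Rel w w'" "g \<in> carrier \<Gamma>"
  have c: "set w \<subseteq> carrier \<Gamma> \<times> UNIV" "set w' \<subseteq> carrier \<Gamma> \<times> UNIV" using Sw_car a by (auto simp: Sw_def)
  have "word_eval \<Gamma> w = word_eval \<Gamma> w'" using pe_eval[OF a(3)] filt_id[of w S] filt_id[of w' S] a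
    by (simp add: Sw_def)
  then show ?thesis using wend_eq[OF a(4) c(1)] wend_eq[OF a(4) c(2)] by simp
qed

definition gen :: "'a \<Rightarrow> (('a \<times> 'a) \<times> bool) list set" where "gen s = cls [(s, True)]"
definition gm :: "'a \<times> bool \<Rightarrow> (('a \<times> 'a) \<times> bool) list set \<times> bool" where "gm x = (gen (fst x), snd x)"

lemma single_Sw: "s \<in> S \<Longrightarrow> [(s,b)] \<in> Sw" by (simp add: Sw_def)

lemma gen_carrier: "s \<in> S \<Longrightarrow> gen s \<in> carrier Gr"
  using single_Sw by (simp add: gen_def Gr_simps)

lemma gen_inj: "inj_on gen S"
proof (rule inj_onI)
  fix s t assume st: "s \<in> S" "t \<in> S" "gen s = gen t"
  then have "pres_equiv Rel [(s,True)] [(t,True)]" using cls_eq single_Sw by (simp add: gen_def)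
  then have e: "word_eval \<Gamma> (filt S [(s,True)]) = word_eval \<Gamma> (filt S [(t,True)])" by (rule pe_eval)
  have c: "s \<in> carrier \<Gamma>" "t \<in> carrier \<Gamma>" using st S_sub by auto
  show "s = t" using e st c by simp
qed

lemma inv_gen: "s \<in> S \<Longrightarrow> inv\<^bsub>Gr\<^esub> (gen s) = cls [(s,False)]"
proof -
  assume s: "s \<in> S"
  have "cls [(s,False)] \<otimes>\<^bsub>Gr\<^esub> gen s = cls ([(s,False)] @ [(s,True)])"
    unfolding gen_def using mult_cls single_Sw s by blast
  also have "\<dots> = cls []"
  proof -
    have "[(s,False),(s,True)] \<in> Sw" using s by (simp add: Sw_def)
    moreover have "pres_equiv Rel [(s,False),(s,True)] []" using pe_free0[of Rel "(s,False)"] by (simp add: flip_def)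
    ultimately show ?thesis using cls_eq[OF _ Nil_Sw] by simp
  qed
  finally have "cls [(s,False)] \<otimes>\<^bsub>Gr\<^esub> gen s = \<one>\<^bsub>Gr\<^esub>" by (simp add: Gr_simps)
  then show ?thesis using group.inv_equality[OF group_Gr] gen_carrier s single_Sw by (simp add: Gr_simps)
qed

lemma eval_gm: "w \<in> Sw \<Longrightarrow> word_eval Gr (map gm w) = cls w"
proof (induction w)
  case Nil then show ?case using group.word_eval_Nil[OF group_Gr] by (simp add: Gr_simps)
next
  case (Cons x w)
  obtain s b where x: "x = (s,b)" by force
  have s: "s \<in> S" and w: "w \<in> Sw" using Cons.prems x by (auto simp: Sw_def)
  have "word_eval Gr (map gm (x # w)) = (if b then gen s else inv\<^bsub>Gr\<^esub> gen s) \<otimes>\<^bsub>Gr\<^esub> cls w"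
  proof -
    have "map gm (x # w) = (gen s, b) # map gm w" by (simp add: gm_def x)
    then show ?thesis using group.word_eval_Cons[OF group_Gr] Cons.IH[OF w] by simp
  qed
  also have "\<dots> = cls [(s,b)] \<otimes>\<^bsub>Gr\<^esub> cls w" using inv_gen[OF s] by (simp add: gen_def)
  also have "\<dots> = cls (x # w)" using mult_cls[OF single_Sw[OF s] w] x by simp
  finally show ?case .
qed

lemma gm_flip: "gm (flip x) = flip (gm x)"
  by (simp add: gm_def flip_def)

lemma Gr_gen: "C \<in> carrier Gr \<Longrightarrow> \<exists>w. set w \<subseteq> gen ` S \<times> UNIV \<and> word_eval Gr w = C"
proof -
  assume "C \<in> carrier Gr"
  then obtain w where w: "w \<in> Sw" "C = cls w" by (auto simp: Gr_simps)
  have "set (map gm w) \<subseteq> gen ` S \<times> UNIV" using w(1) by (auto simp: Sw_def gm_def)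
  then show ?thesis using eval_gm[OF w(1)] w(2) by blast
qed

lemma Rel_finite: "finite S \<Longrightarrow> finite Rel"
proof -
  assume fS: "finite S"
  have "Rel \<subseteq> {xs. set xs \<subseteq> S \<times> UNIV \<and> length xs \<le> r}" using Rel_props(1,3) by blast
  moreover have "finite {xs. set xs \<subseteq> (S \<times> (UNIV :: bool set)) \<and> length xs \<le> r}"
    by (rule finite_lists_length_le) (use fS in simp)
  ultimately show ?thesis by (rule finite_subset)
qed

lemma Gr_fp: "finite S \<Longrightarrow> finitely_presented Gr"
proof -
  assume fS: "finite S"
  define ginv where "ginv = inv_into S gen"
  define \<phi> where "\<phi> = (\<lambda>x. (ginv (fst x), snd (x :: (('a \<times> 'a) \<times> bool) list set \<times> bool)))"
  have phi_flip: "\<phi> (flip x) = flip (\<phi> x)" for x by (simp add: \<phi>_def flip_def)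
  have phi_gm: "map \<phi> (map gm w) = w" if "w \<in> Sw" for w
  proof -
    have "\<phi> (gm x) = x" if "x \<in> set w" for x
      using \<open>w \<in> Sw\<close> that gen_inj by (auto simp: \<phi>_def gm_def ginv_def Sw_def inv_into_f_f)
    then show ?thesis by (simp add: map_idI)
  qed
  have gm_phi: "map gm (map \<phi> w) = w" "map \<phi> w \<in> Sw" if "set w \<subseteq> gen ` S \<times> UNIV" for w
  proof -
    have "gm (\<phi> x) = x" "fst (\<phi> x) \<in> S" if "x \<in> set w" for x
      using \<open>set w \<subseteq> gen ` S \<times> UNIV\<close> that
      by (auto simp: \<phi>_def gm_def ginv_def f_inv_into_f inv_into_into)
    then show "map gm (map \<phi> w) = w" by (simp add: map_idI)
    have "set (map \<phi> w) \<subseteq> S \<times> UNIV"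
    proof
      fix z assume "z \<in> set (map \<phi> w)"
      then obtain x where "x \<in> set w" "z = \<phi> x" by auto
      then show "z \<in> S \<times> UNIV" using \<open>\<And>x. x \<in> set w \<Longrightarrow> fst (\<phi> x) \<in> S\<close> by (simp add: mem_Times_iff)
    qed
    then show "map \<phi> w \<in> Sw" by (simp add: Sw_def)
  qed
  have RS: "Rel \<subseteq> Sw" using Rel_props(1) by (auto simp: Sw_def)
  have back_R: "map \<phi> ` map gm ` Rel = Rel"
  proof -
    have "map \<phi> ` map gm ` Rel = (\<lambda>w. map \<phi> (map gm w)) ` Rel" by (simp add: image_image)
    also have "\<dots> = Rel" using phi_gm RS by (auto simp: image_iff) (metis subsetD)+
    finally show ?thesis .
  qed
  show ?thesis unfolding finitely_presented_def
  proof (intro exI[of _ "gen ` S"] exI[of _ "map gm ` Rel"] conjI allI impI ballI)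
    show "finite (gen ` S)" using fS by simp
    show "gen ` S \<subseteq> carrier Gr" using gen_carrier by auto
    show "finite (map gm ` Rel)" using Rel_finite[OF fS] by simp
    show "set \<rho> \<subseteq> gen ` S \<times> UNIV" if "\<rho> \<in> map gm ` Rel" for \<rho>
      using that RS by (force simp: gm_def Sw_def)
    show "\<exists>w. set w \<subseteq> gen ` S \<times> UNIV \<and> word_eval Gr w = g" if "g \<in> carrier Gr" for g
      using Gr_gen that by blast
    fix w w' :: "((('a \<times> 'a) \<times> bool) list set \<times> bool) list" assume w: "set w \<subseteq> gen ` S \<times> UNIV" and w': "set w' \<subseteq> gen ` S \<times> UNIV"
    have e1: "word_eval Gr w = cls (map \<phi> w)" using eval_gm[OF gm_phi(2)[OF w]] gm_phi(1)[OF w] by simp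
    have e2: "word_eval Gr w' = cls (map \<phi> w')" using eval_gm[OF gm_phi(2)[OF w']] gm_phi(1)[OF w'] by simp
    have "word_eval Gr w = word_eval Gr w' \<longleftrightarrow> pres_equiv Rel (map \<phi> w) (map \<phi> w')"
      using e1 e2 cls_eq gm_phi(2) w w' by simp
    also have "\<dots> \<longleftrightarrow> pres_equiv (map gm ` Rel) w w'"
    proof
      assume "pres_equiv Rel (map \<phi> w) (map \<phi> w')"
      then show "pres_equiv (map gm ` Rel) w w'"
        using pe_map[of gm, OF gm_flip] gm_phi(1)[OF w] gm_phi(1)[OF w'] by metis
    next
      assume "pres_equiv (map gm ` Rel) w w'"
      then show "pres_equiv Rel (map \<phi> w) (map \<phi> w')"
        using pe_map[of \<phi>, OF phi_flip] back_R by metis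
    qed
    finally show "word_eval Gr w = word_eval Gr w' \<longleftrightarrow> pres_equiv (map gm ` Rel) w w'" .
  qed
qed

definition hmap :: "(('a \<times> 'a) \<times> bool) list set \<Rightarrow> 'a" where "hmap C = word_eval \<Gamma> (rep C)"

lemma hmap_cls: "w \<in> Sw \<Longrightarrow> hmap (cls w) = word_eval \<Gamma> w"
proof -
  assume w: "w \<in> Sw"
  have "pres_equiv Rel (rep (cls w)) w" using rep_cls[OF w] cls_eq[OF _ w] by blast
  then show ?thesis using pe_eval filt_id rep_cls[OF w] w by (metis Sw_def mem_Collect_eq hmap_def)
qed

lemma hmap_hom: "hmap \<in> hom Gr \<Gamma>"
proof (rule homI)
  fix x assume "x \<in> carrier Gr"
  then obtain w where w: "w \<in> Sw" "x = cls w" by (auto simp: Gr_simps)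
  then have "set w \<subseteq> S \<times> UNIV" by (simp add: Sw_def)
  then show "hmap x \<in> carrier \<Gamma>" using hmap_cls[OF w(1)] word_eval_carrier[OF Sw_car] w(2) by simp
next
  fix x y assume "x \<in> carrier Gr" "y \<in> carrier Gr"
  then obtain a b where ab: "a \<in> Sw" "b \<in> Sw" "x = cls a" "y = cls b" by (auto simp: Gr_simps)
  have c: "set a \<subseteq> carrier \<Gamma> \<times> UNIV" "set b \<subseteq> carrier \<Gamma> \<times> UNIV" using ab Sw_car by (auto simp: Sw_def)
  show "hmap (x \<otimes>\<^bsub>Gr\<^esub> y) = hmap x \<otimes> hmap y"
    using mult_cls[OF ab(1,2)] hmap_cls[OF Sw_app[OF ab(1,2)]] hmap_cls[OF ab(1)] hmap_cls[OF ab(2)]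
      word_eval_append[OF c] ab(3,4) by simp
qed

lemma hmap_surj:
  assumes conn: "connected_graph (Cay \<Gamma> S)"
  shows "hmap ` carrier Gr = carrier \<Gamma>"
proof
  show "hmap ` carrier Gr \<subseteq> carrier \<Gamma>" using hmap_hom by (auto simp: hom_def)
  show "carrier \<Gamma> \<subseteq> hmap ` carrier Gr"
  proof
    fix g assume g: "g \<in> carrier \<Gamma>"
    then obtain W where W: "walk (Cay \<Gamma> S) \<one> W g" using conn unfolding connected_graph_def by auto
    note wi = walk_imp[OF S_sub W]
    have "g = word_eval \<Gamma> (word_of W)" using wi wend_eq[of \<one> "word_of W"] Sw_car word_eval_carrier by auto
    then have "g = hmap (cls (word_of W))" using hmap_cls wi by (simp add: Sw_def)
    then show "g \<in> hmap ` carrier Gr" using wi by (auto simp: Gr_simps Sw_def)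
  qed
qed

abbreviation "LC \<equiv> local_cover (Cay \<Gamma> S) r x0"

lemma verts_LC: "verts LC = carrier Gr"
proof -
  have "verts LC = {cover_class (Cay \<Gamma> S) r x0 W | W. \<exists>y. walk (Cay \<Gamma> S) x0 W y}"
    by (simp add: local_cover_def)
  also have "\<dots> = cls ` Sw"
  proof (intro equalityI subsetI)
    fix C assume "C \<in> {cover_class (Cay \<Gamma> S) r x0 W | W. \<exists>y. walk (Cay \<Gamma> S) x0 W y}"
    then obtain W y where "C = cover_class (Cay \<Gamma> S) r x0 W" "walk (Cay \<Gamma> S) x0 W y" by blast
    then show "C \<in> cls ` Sw" using walk_imp[OF S_sub] by (metis Sw_def cls_def image_eqI mem_Collect_eq)
  next
    fix C assume "C \<in> cls ` Sw"
    then obtain w where "w \<in> Sw" "C = cls w" by blast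
    then show "C \<in> {cover_class (Cay \<Gamma> S) r x0 W | W. \<exists>y. walk (Cay \<Gamma> S) x0 W y}"
      using walk_walk_of[OF S_sub x0] unfolding cls_def Sw_def by blast
  qed
  finally show ?thesis by (simp add: Gr_simps)
qed

lemma edges_LC: "(C, e) \<in> edges LC \<longleftrightarrow> (\<exists>w\<in>Sw. \<exists>s\<in>S. C = cls w \<and> e = (wend \<Gamma> x0 w, s))"
proof
  assume "(C, e) \<in> edges LC"
  then have h: "\<exists>W\<in>C. \<exists>y. walk (Cay \<Gamma> S) x0 W y \<and> C = cover_class (Cay \<Gamma> S) r x0 W"
    "e \<in> carrier \<Gamma> \<times> S" "\<exists>W\<in>C. walk (Cay \<Gamma> S) x0 W (fst (ends (Cay \<Gamma> S) e))"
    by (auto simp: local_cover_def)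
  obtain W y where W: "walk (Cay \<Gamma> S) x0 W y" "C = cover_class (Cay \<Gamma> S) r x0 W" using h(1) by blast
  define w where "w = word_of W"
  have w: "w \<in> Sw" "C = cls w" using walk_imp[OF S_sub W(1)] W(2) by (auto simp: w_def Sw_def cls_def)
  obtain a s where e: "e = (a,s)" "a \<in> carrier \<Gamma>" "s \<in> S" using h(2) by auto
  obtain W' where W': "W' \<in> C" "walk (Cay \<Gamma> S) x0 W' a" using h(3) e by auto
  obtain w' where w': "w' \<in> Sw" "W' = walk_of \<Gamma> x0 w'" "pres_equiv Rel w w'" using cls_mem w W' by blast
  have "a = wend \<Gamma> x0 w'" using walk_imp[OF S_sub W'(2)] w'(2) word_of_walk_of by metis
  then have "a = wend \<Gamma> x0 w" using pe_wend[OF w(1) w'(1) w'(3) x0] by simp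
  then show "\<exists>w\<in>Sw. \<exists>s\<in>S. C = cls w \<and> e = (wend \<Gamma> x0 w, s)" using w e by blast
next
  assume "\<exists>w\<in>Sw. \<exists>s\<in>S. C = cls w \<and> e = (wend \<Gamma> x0 w, s)"
  then obtain w s where w: "w \<in> Sw" "s \<in> S" "C = cls w" "e = (wend \<Gamma> x0 w, s)" by blast
  have wk: "walk (Cay \<Gamma> S) x0 (walk_of \<Gamma> x0 w) (wend \<Gamma> x0 w)" using walk_walk_of[OF S_sub x0] w by (simp add: Sw_def)
  have m: "walk_of \<Gamma> x0 w \<in> C" using self_mem w by simp
  have "set w \<subseteq> S \<times> UNIV" using w by (simp add: Sw_def)
  then have ec: "wend \<Gamma> x0 w \<in> carrier \<Gamma>" using wend_carrier[OF x0 Sw_car] by simp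
  show "(C, e) \<in> edges LC" unfolding local_cover_def using wk m ec w by (auto simp: cls_def)
qed

lemma ends_LC: "w \<in> Sw \<Longrightarrow> s \<in> S \<Longrightarrow> ends LC (cls w, (wend \<Gamma> x0 w, s)) = (cls w, cls (w @ [(s,True)]))"
proof -
  assume w: "w \<in> Sw" and s: "s \<in> S"
  have ws: "w @ [(s,True)] \<in> Sw" using Sw_app[OF w single_Sw[OF s]] .
  have "{W'. \<exists>W\<in>cls w. walk (Cay \<Gamma> S) x0 W (wend \<Gamma> x0 w)
            \<and> cover_rel (Cay \<Gamma> S) r x0 (W @ [((wend \<Gamma> x0 w, s), True)]) W'} = cls (w @ [(s,True)])"
  proof (intro equalityI subsetI)
    fix W' assume "W' \<in> {W'. \<exists>W\<in>cls w. walk (Cay \<Gamma> S) x0 W (wend \<Gamma> x0 w)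
            \<and> cover_rel (Cay \<Gamma> S) r x0 (W @ [((wend \<Gamma> x0 w, s), True)]) W'}"
    then obtain W where W: "W \<in> cls w" "cover_rel (Cay \<Gamma> S) r x0 (W @ [((wend \<Gamma> x0 w, s), True)]) W'" by blast
    obtain w1 where w1: "w1 \<in> Sw" "W = walk_of \<Gamma> x0 w1" "pres_equiv Rel w w1" using cls_mem w W(1) by blast
    have we: "wend \<Gamma> x0 w1 = wend \<Gamma> x0 w" using pe_wend[OF w w1(1) w1(3) x0] by simp
    have "W @ [((wend \<Gamma> x0 w, s), True)] = walk_of \<Gamma> x0 (w1 @ [(s,True)])"
      using w1(2) we by (simp add: walk_of_append)
    then have "W' \<in> cls (w1 @ [(s,True)])" using W(2) by (simp add: cls_def cover_class_def)
    moreover have "cls (w1 @ [(s,True)]) = cls (w @ [(s,True)])"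
      using cls_eq Sw_app[OF w1(1) single_Sw[OF s]] ws pe_congR[OF pe_sym[OF w1(3)]] by blast
    ultimately show "W' \<in> cls (w @ [(s,True)])" by simp
  next
    fix W' assume W': "W' \<in> cls (w @ [(s,True)])"
    have "walk_of \<Gamma> x0 w @ [((wend \<Gamma> x0 w, s), True)] = walk_of \<Gamma> x0 (w @ [(s,True)])"
      by (simp add: walk_of_append)
    then have "cover_rel (Cay \<Gamma> S) r x0 (walk_of \<Gamma> x0 w @ [((wend \<Gamma> x0 w, s), True)]) W'"
      using W' by (simp add: cls_def cover_class_def)
    moreover have "walk (Cay \<Gamma> S) x0 (walk_of \<Gamma> x0 w) (wend \<Gamma> x0 w)"
      using walk_walk_of[OF S_sub x0] w by (simp add: Sw_def)
    ultimately show "W' \<in> {W'. \<exists>W\<in>cls w. walk (Cay \<Gamma> S) x0 W (wend \<Gamma> x0 w)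
            \<and> cover_rel (Cay \<Gamma> S) r x0 (W @ [((wend \<Gamma> x0 w, s), True)]) W'}"
      using self_mem[OF w] by blast
  qed
  then show ?thesis by (simp add: local_cover_def)
qed

lemma iso: "mg_iso LC (Cay Gr (gen ` S))"
  unfolding mg_iso_def
proof (intro exI conjI ballI)
  show "bij_betw id (verts LC) (verts (Cay Gr (gen ` S)))" using verts_LC by (simp add: Cay_def)
  let ?g = "\<lambda>(C :: (('a \<times> 'a) \<times> bool) list set, e :: 'a \<times> 'a). (C, gen (snd e))"
  show "bij_betw ?g (edges LC) (edges (Cay Gr (gen ` S)))"
    unfolding bij_betw_def
  proof
    show "inj_on ?g (edges LC)"
    proof (rule inj_onI)
      fix x y assume x: "x \<in> edges LC" and y: "y \<in> edges LC" and eq: "?g x = ?g y"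
      obtain C e where x1: "x = (C,e)" by (cases x)
      obtain D f where y1: "y = (D,f)" by (cases y)
      note xy = x1 y1
      obtain w s where ws: "w\<in>Sw" "s\<in>S" "C = cls w" "e = (wend \<Gamma> x0 w, s)" using edges_LC x xy by blast
      obtain w' s' where ws': "w'\<in>Sw" "s'\<in>S" "D = cls w'" "f = (wend \<Gamma> x0 w', s')" using edges_LC y xy by blast
      have "C = D" "gen s = gen s'" using eq xy ws ws' by auto
      then have "s = s'" "pres_equiv Rel w w'" using gen_inj ws ws' cls_eq by (auto simp: inj_on_def)
      then show "x = y" using xy ws ws' pe_wend[OF ws(1) ws'(1) _ x0] \<open>C = D\<close> by auto
    qed
    show "?g ` edges LC = edges (Cay Gr (gen ` S))"
    proof (intro equalityI subsetI)
      fix z assume "z \<in> ?g ` edges LC"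
      then obtain C e where "(C,e) \<in> edges LC" "z = ?g (C,e)" by force
      then obtain w s where "w\<in>Sw" "s\<in>S" "C = cls w" "e = (wend \<Gamma> x0 w, s)" "z = (C, gen s)"
        using edges_LC by auto
      then show "z \<in> edges (Cay Gr (gen ` S))" by (auto simp: Cay_def Gr_simps)
    next
      fix z assume "z \<in> edges (Cay Gr (gen ` S))"
      then obtain w s where ws: "w \<in> Sw" "s \<in> S" "z = (cls w, gen s)" by (auto simp: Cay_def Gr_simps)
      then have "(cls w, (wend \<Gamma> x0 w, s)) \<in> edges LC" using edges_LC by blast
      then show "z \<in> ?g ` edges LC" using ws by force
    qed
  qed
  fix x assume x: "x \<in> edges LC"
  obtain C e where xy: "x = (C,e)" by (cases x)
  obtain w s where ws: "w\<in>Sw" "s\<in>S" "C = cls w" "e = (wend \<Gamma> x0 w, s)" using edges_LC x xy by blast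
  have "ends (Cay Gr (gen ` S)) (?g x) = (cls w, cls w \<otimes>\<^bsub>Gr\<^esub> gen s)" using xy ws by (simp add: Cay_def)
  also have "\<dots> = (cls w, cls (w @ [(s,True)]))" using mult_cls ws single_Sw by (simp add: gen_def)
  also have "\<dots> = ends LC x" using ends_LC[OF ws(1,2)] xy ws by simp
  finally show "ends (Cay Gr (gen ` S)) (?g x) = (id (fst (ends LC x)), id (snd (ends LC x)))
      \<or> ends (Cay Gr (gen ` S)) (?g x) = (id (snd (ends LC x)), id (fst (ends LC x)))" by simp
qed

end



theorem theorem4p10:
  fixes \<Gamma> :: "'a monoid" and S :: "'a set" and r :: nat and x0 :: 'a
  assumes "group \<Gamma>"
    and "S \<subseteq> carrier \<Gamma>"
    and "connected_graph (Cay \<Gamma> S)"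
    and "locally_finite (Cay \<Gamma> S)"
    and "x0 \<in> carrier \<Gamma>"
  shows "\<exists>(\<Gamma>r :: ((('a \<times> 'a) \<times> bool) list set) monoid) Sr.
           group \<Gamma>r \<and> Sr \<subseteq> carrier \<Gamma>r \<and> finitely_presented \<Gamma>r
         \<and> connected_graph (Cay \<Gamma>r Sr) \<and> locally_finite (Cay \<Gamma>r Sr)
         \<and> mg_iso (local_cover (Cay \<Gamma> S) r x0) (Cay \<Gamma>r Sr)
         \<and> (\<exists>h. h \<in> hom \<Gamma>r \<Gamma> \<and> h ` carrier \<Gamma>r = carrier \<Gamma>)"
proof -
  interpret L: lc \<Gamma> S r x0 using assms by (simp add: lc_def lc_axioms_def)
  have sub: "(\<lambda>s. (x0, s)) ` S \<subseteq> {e \<in> edges (Cay \<Gamma> S). fst (ends (Cay \<Gamma> S) e) = x0 \<or> snd (ends (Cay \<Gamma> S) e) = x0}"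
    using assms(5) by auto
  have "finite {e \<in> edges (Cay \<Gamma> S). fst (ends (Cay \<Gamma> S) e) = x0 \<or> snd (ends (Cay \<Gamma> S) e) = x0}"
    using assms(4,5) unfolding locally_finite_def by simp
  then have "finite ((\<lambda>s. (x0, s)) ` S)" using sub finite_subset by blast
  then have fS: "finite S" by (rule finite_imageD) (simp add: inj_on_def)
  have G: "group L.Gr" by (rule L.group_Gr)
  have Ssub: "L.gen ` S \<subseteq> carrier L.Gr" using L.gen_carrier by auto
  show ?thesis
  proof (intro exI[of _ L.Gr] exI[of _ "L.gen ` S"] conjI)
    show "group L.Gr" by (rule G)
    show "L.gen ` S \<subseteq> carrier L.Gr" by (rule Ssub)
    show "finitely_presented L.Gr" by (rule L.Gr_fp[OF fS])
    show "connected_graph (Cay L.Gr (L.gen ` S))"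
      by (rule group.Cay_connected[OF G Ssub L.Gr_gen])
    show "locally_finite (Cay L.Gr (L.gen ` S))"
      by (rule group.Cay_locally_finite[OF G Ssub]) (use fS in simp)
    show "mg_iso (local_cover (Cay \<Gamma> S) r x0) (Cay L.Gr (L.gen ` S))" by (rule L.iso)
    show "\<exists>h. h \<in> hom L.Gr \<Gamma> \<and> h ` carrier L.Gr = carrier \<Gamma>"
      using L.hmap_hom L.hmap_surj[OF assms(3)] by blast
  qed
qed

end
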